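(* Let $\mathbb R$ be equipped with the usual metric $|\cdot|$ and base point $0$. If $f\colon\mathbb R\to\mathbb R$ is a Lipschitz map with $f(0)=0$ such that $\widehat f\colon\mathcal F(\mathbb R)\to\mathcal F(\mathbb R)$ is compact, then $f=0$ (so the only compact operator of the form $\widehat f$ on $\mathcal F(\mathbb R)$ is $0$).
   Context: Scalars are $\mathbb K=\mathbb R$ or $\mathbb C$. For a pointed metric space $(M,d,0_M)$, $\mathrm{Lip}_0(M)$ denotes the Banach space of Lipschitz functions $g\colon M\to\mathbb K$ with $g(0_M)=0$ normed by the best Lipschitz constant; $\delta(x)\in\mathrm{Lip}_0(M)^*$ is evaluation at $x$; the Lipschitz-free space $\mathcal F(M)$ is the norm-closed linear span of $\{\delta(x):x\in M\}$ in $\mathrm{Lip}_0(M)^*$. For a Lipschitz map $f\colon M\to N$ with $f(0_M)=0_N$, $\widehat f\colon\mathcal F(M)\to\mathcal F(N)$ is the unique bounded linear operator with $\widehat f(\delta(x))=\delta(f(x))$ for all $x\in M$. *)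

theory Defs
  imports "HOL-Analysis.Analysis"
begin

text \<open>Lipschitz-free space over the pointed metric space (R, |.|, 0), real scalars.
Elements of Lip0(R)^* are represented as functions (real => real) => real that
vanish outside Lip0(R).\<close>

definition Lip0 :: "(real \<Rightarrow> real) set" where
  "Lip0 = {g. g 0 = 0 \<and> (\<exists>C. C-lipschitz_on UNIV g)}"

definition lipnorm :: "(real \<Rightarrow> real) \<Rightarrow> real" where
  "lipnorm g = Inf {C. C-lipschitz_on UNIV g}"

definition dnorm :: "((real \<Rightarrow> real) \<Rightarrow> real) \<Rightarrow> real" where
  "dnorm \<phi> = Sup {\<bar>\<phi> g\<bar> | g. g \<in> Lip0 \<and> lipnorm g \<le> 1}"

definition delta :: "real \<Rightarrow> (real \<Rightarrow> real) \<Rightarrow> real" where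
  "delta x = (\<lambda>g. if g \<in> Lip0 then g x else 0)"

text \<open>Norm-closure in Lip0(R)^* of the linear span of the evaluation functionals.\<close>
definition FreeR :: "((real \<Rightarrow> real) \<Rightarrow> real) set" where
  "FreeR = {\<phi>. (\<forall>g. g \<notin> Lip0 \<longrightarrow> \<phi> g = 0) \<and>
      (\<forall>\<epsilon>>0. \<exists>n::nat. \<exists>a x. \<forall>g. g \<in> Lip0 \<and> lipnorm g \<le> 1 \<longrightarrow>
          \<bar>\<phi> g - (\<Sum>i<n. a i * delta (x i) g)\<bar> \<le> \<epsilon>)}"

definition linear_on_FreeR :: "(((real \<Rightarrow> real) \<Rightarrow> real) \<Rightarrow> ((real \<Rightarrow> real) \<Rightarrow> real)) \<Rightarrow> bool" where
  "linear_on_FreeR T \<longleftrightarrow> (\<forall>\<phi>\<in>FreeR. T \<phi> \<in> FreeR) \<and>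
     (\<forall>\<phi>\<in>FreeR. \<forall>\<psi>\<in>FreeR. \<forall>a b::real. T (\<lambda>g. a * \<phi> g + b * \<psi> g) = (\<lambda>g. a * T \<phi> g + b * T \<psi> g))"

definition bounded_on_FreeR :: "(((real \<Rightarrow> real) \<Rightarrow> real) \<Rightarrow> ((real \<Rightarrow> real) \<Rightarrow> real)) \<Rightarrow> bool" where
  "bounded_on_FreeR T \<longleftrightarrow> (\<exists>C. \<forall>\<phi>\<in>FreeR. dnorm (T \<phi>) \<le> C * dnorm \<phi>)"

definition compact_on_FreeR :: "(((real \<Rightarrow> real) \<Rightarrow> real) \<Rightarrow> ((real \<Rightarrow> real) \<Rightarrow> real)) \<Rightarrow> bool" where
  "compact_on_FreeR T \<longleftrightarrow> (\<forall>\<phi>::nat \<Rightarrow> ((real \<Rightarrow> real) \<Rightarrow> real).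
     (\<forall>n. \<phi> n \<in> FreeR \<and> dnorm (\<phi> n) \<le> 1) \<longrightarrow>
     (\<exists>r \<psi>. strict_mono r \<and> \<psi> \<in> FreeR \<and>
        (\<lambda>n. dnorm (\<lambda>g. T (\<phi> (r n)) g - \<psi> g)) \<longlonglongrightarrow> 0))"

end

theory Submission
  imports Defs
begin

lemma lipnorm_bound:
  assumes "g \<in> Lip0"
  shows "\<bar>g y - g x\<bar> \<le> lipnorm g * \<bar>y - x\<bar>"
proof (cases "x = y")
  case True then show ?thesis by simp
next
  case False
  obtain C0 where C0: "C0-lipschitz_on UNIV g" using assms unfolding Lip0_def by blast
  have "\<bar>g y - g x\<bar> / \<bar>y - x\<bar> \<le> lipnorm g"
    unfolding lipnorm_def
  proof (rule cInf_greatest)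
    show "{C. C-lipschitz_on UNIV g} \<noteq> {}" using C0 by blast
  next
    fix C assume "C \<in> {C. C-lipschitz_on UNIV g}"
    then have "dist (g y) (g x) \<le> C * dist y x" by (auto simp: lipschitz_on_def)
    then show "\<bar>g y - g x\<bar> / \<bar>y - x\<bar> \<le> C" using False
      by (simp add: dist_real_def divide_le_eq)
  qed
  then show ?thesis using False by (simp add: divide_le_eq mult.commute)
qed

lemma lipnorm_le:
  assumes "C-lipschitz_on UNIV g"
  shows "lipnorm g \<le> C"
  unfolding lipnorm_def
proof (rule cInf_lower)
  show "C \<in> {C. C-lipschitz_on UNIV g}" using assms by blast
  show "bdd_below {C. C-lipschitz_on UNIV g}"
    by (rule bdd_belowI[of _ 0]) (auto dest: lipschitz_on_nonneg)
qed

lemma dnorm_upper: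
  assumes "\<exists>B. \<forall>h. h \<in> Lip0 \<and> lipnorm h \<le> 1 \<longrightarrow> \<bar>\<phi> h\<bar> \<le> B"
    and "g \<in> Lip0" "lipnorm g \<le> 1"
  shows "\<bar>\<phi> g\<bar> \<le> dnorm \<phi>"
proof -
  obtain B where B: "\<forall>h. h \<in> Lip0 \<and> lipnorm h \<le> 1 \<longrightarrow> \<bar>\<phi> h\<bar> \<le> B" using assms(1) by blast
  show ?thesis unfolding dnorm_def
    apply (rule cSup_upper)
    using assms(2,3) apply blast
    apply (rule bdd_aboveI[of _ B])
    using B by blast
qed

lemma FreeR_bdd:
  assumes "\<phi> \<in> FreeR"
  shows "\<exists>B. \<forall>h. h \<in> Lip0 \<and> lipnorm h \<le> 1 \<longrightarrow> \<bar>\<phi> h\<bar> \<le> B"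
proof -
  obtain n a x where H: "\<forall>g. g \<in> Lip0 \<and> lipnorm g \<le> 1 \<longrightarrow>
          \<bar>\<phi> g - (\<Sum>i<(n::nat). a i * delta (x i) g)\<bar> \<le> 1"
    using assms unfolding FreeR_def mem_Collect_eq by (metis zero_less_one)
  have "\<bar>\<phi> h\<bar> \<le> 1 + (\<Sum>i<n. \<bar>a i\<bar> * \<bar>x i\<bar>)" if h: "h \<in> Lip0" "lipnorm h \<le> 1" for h
  proof -
    have "\<bar>(\<Sum>i<n. a i * delta (x i) h)\<bar> \<le> (\<Sum>i<n. \<bar>a i * delta (x i) h\<bar>)"
      by (rule sum_abs)
    also have "\<dots> \<le> (\<Sum>i<n. \<bar>a i\<bar> * \<bar>x i\<bar>)"
    proof (rule sum_mono)
      fix i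
      have "\<bar>h (x i) - h 0\<bar> \<le> lipnorm h * \<bar>x i - 0\<bar>" by (rule lipnorm_bound[OF h(1)])
      also have "\<dots> \<le> \<bar>x i\<bar>" using h(2) mult_right_mono[OF h(2), of "\<bar>x i\<bar>"] by simp
      finally have "\<bar>h (x i)\<bar> \<le> \<bar>x i\<bar>" using h(1) by (simp add: Lip0_def)
      then show "\<bar>a i * delta (x i) h\<bar> \<le> \<bar>a i\<bar> * \<bar>x i\<bar>"
        using h(1) by (simp add: delta_def abs_mult mult_left_mono)
    qed
    finally show ?thesis using H h by fastforce
  qed
  then show ?thesis by blast
qed

lemma delta_FreeR: "delta x \<in> FreeR"
  unfolding FreeR_def
proof (intro CollectI conjI allI impI)
  fix g assume "g \<notin> Lip0" then show "delta x g = 0" by (simp add: delta_def)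
next
  fix e :: real assume "e > 0"
  show "\<exists>n::nat. \<exists>a xa. \<forall>g. g \<in> Lip0 \<and> lipnorm g \<le> 1 \<longrightarrow>
          \<bar>delta x g - (\<Sum>i<n. a i * delta (xa i) g)\<bar> \<le> e"
    by (rule exI[of _ 1], rule exI[of _ "\<lambda>_. 1"], rule exI[of _ "\<lambda>_. x"]) (use \<open>e>0\<close> in simp)
qed

lemma bisect:
  fixes f :: "real \<Rightarrow> real"
  assumes "a < b" "c * (b - a) \<le> \<bar>f b - f a\<bar>"
  shows "\<exists>x y. x < y \<and> y - x = (b - a) / 2 ^ k \<and> c * (y - x) \<le> \<bar>f y - f x\<bar>"
proof (induction k)
  case 0 then show ?case using assms by auto
next
  case (Suc k)
  then obtain x y where xy: "x < y" "y - x = (b - a) / 2 ^ k" "c * (y - x) \<le> \<bar>f y - f x\<bar>" by blast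
  define m where "m = (x + y) / 2"
  have tri: "\<bar>f y - f x\<bar> \<le> \<bar>f m - f x\<bar> + \<bar>f y - f m\<bar>" by linarith
  have "c * (y - x) = c * (m - x) + c * (y - m)" by (simp add: m_def field_simps)
  then have "c * (m - x) \<le> \<bar>f m - f x\<bar> \<or> c * (y - m) \<le> \<bar>f y - f m\<bar>" using xy(3) tri by linarith
  moreover have "m - x = (b - a) / 2 ^ Suc k" "y - m = (b - a) / 2 ^ Suc k" "x < m" "m < y"
    using xy by (auto simp: m_def field_simps)
  ultimately show ?case by blast
qed

theorem mainTheorem11:
  fixes f :: "real \<Rightarrow> real" and T :: "((real \<Rightarrow> real) \<Rightarrow> real) \<Rightarrow> ((real \<Rightarrow> real) \<Rightarrow> real)"
  assumes "\<exists>C. C-lipschitz_on UNIV f" and "f 0 = 0"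
    and "linear_on_FreeR T" and "bounded_on_FreeR T"
    and "\<forall>x. T (delta x) = delta (f x)"
    and "compact_on_FreeR T"
  shows "f = (\<lambda>_. 0)"
proof (rule ccontr)
  assume "f \<noteq> (\<lambda>_. 0)"
  then obtain a0 where a0: "f a0 \<noteq> 0" by blast
  define a where "a = min a0 0"
  define b where "b = max a0 0"
  have ab: "a < b" using a0 assms(2) by (cases "a0 = 0") (auto simp: a_def b_def)
  have fab: "f b - f a \<noteq> 0" using a0 assms(2) by (auto simp: a_def b_def min_def max_def)
  define c where "c = \<bar>f b - f a\<bar> / (b - a)"
  have c0: "c > 0" using ab fab by (simp add: c_def)
  have cab: "c * (b - a) \<le> \<bar>f b - f a\<bar>" using ab by (simp add: c_def)
  have "\<forall>k. \<exists>x y. x < y \<and> y - x = (b - a) / 2 ^ k \<and> c * (y - x) \<le> \<bar>f y - f x\<bar>"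
    using bisect[OF ab cab] by blast
  then obtain X Y where XY: "\<And>k. X k < Y k" "\<And>k. Y k - X k = (b - a) / 2 ^ k"
     "\<And>k. c * (Y k - X k) \<le> \<bar>f (Y k) - f (X k)\<bar>" by metis
  define L where "L k = Y k - X k" for k
  have L0: "L k > 0" for k using XY(1)[of k] by (simp add: L_def)
  define \<phi> where "\<phi> k = (\<lambda>g. (1 / L k) * delta (Y k) g + (- (1 / L k)) * delta (X k) g)" for k
  have lin: "\<forall>\<phi>\<in>FreeR. \<forall>\<psi>\<in>FreeR. \<forall>a b::real. T (\<lambda>g. a * \<phi> g + b * \<psi> g) = (\<lambda>g. a * T \<phi> g + b * T \<psi> g)"
    and TF: "\<forall>\<phi>\<in>FreeR. T \<phi> \<in> FreeR"
    using assms(3) unfolding linear_on_FreeR_def by blast+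
  have Tphi: "T (\<phi> k) = (\<lambda>g. (1 / L k) * delta (f (Y k)) g + (- (1 / L k)) * delta (f (X k)) g)" for k
  proof -
    have "T (\<phi> k) = (\<lambda>g. (1 / L k) * T (delta (Y k)) g + (- (1 / L k)) * T (delta (X k)) g)"
      unfolding \<phi>_def using lin delta_FreeR by blast
    then show ?thesis using assms(5) by simp
  qed
  have phiF: "\<phi> k \<in> FreeR" for k
    unfolding FreeR_def
  proof (intro CollectI conjI allI impI)
    fix g assume "g \<notin> Lip0" then show "\<phi> k g = 0" by (simp add: delta_def \<phi>_def)
  next
    fix e :: real assume "e > 0"
    show "\<exists>n::nat. \<exists>a xa. \<forall>g. g \<in> Lip0 \<and> lipnorm g \<le> 1 \<longrightarrow>
          \<bar>\<phi> k g - (\<Sum>i<n. a i * delta (xa i) g)\<bar> \<le> e"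
      by (rule exI[of _ 2], rule exI[of _ "\<lambda>i. if i = 0 then 1 / L k else - (1 / L k)"],
          rule exI[of _ "\<lambda>i. if i = 0 then Y k else X k"])
         (use \<open>e>0\<close> in \<open>simp add: \<phi>_def lessThan_nat_numeral\<close>)
  qed
  have zeroLip: "(\<lambda>_. 0::real) \<in> Lip0" "lipnorm (\<lambda>_. 0::real) \<le> 1"
  proof -
    have l: "0-lipschitz_on UNIV (\<lambda>_. 0::real)" by (simp add: lipschitz_on_def)
    then show "(\<lambda>_. 0::real) \<in> Lip0" by (auto simp: Lip0_def)
    show "lipnorm (\<lambda>_. 0::real) \<le> 1" using lipnorm_le[OF l] by simp
  qed
  have phiN: "dnorm (\<phi> k) \<le> 1" for k
    unfolding dnorm_def
  proof (rule cSup_least)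
    show "{\<bar>\<phi> k g\<bar> |g. g \<in> Lip0 \<and> lipnorm g \<le> 1} \<noteq> {}" using zeroLip by blast
  next
    fix z assume "z \<in> {\<bar>\<phi> k g\<bar> |g. g \<in> Lip0 \<and> lipnorm g \<le> 1}"
    then obtain g where g: "g \<in> Lip0" "lipnorm g \<le> 1" "z = \<bar>\<phi> k g\<bar>" by blast
    have "\<phi> k g = (g (Y k) - g (X k)) / L k" using g by (simp add: \<phi>_def delta_def diff_divide_distrib)
    moreover have "\<bar>g (Y k) - g (X k)\<bar> \<le> lipnorm g * \<bar>Y k - X k\<bar>" by (rule lipnorm_bound[OF g(1)])
    moreover have "\<bar>Y k - X k\<bar> = L k" using L0[of k] by (simp add: L_def)
    ultimately have "z \<le> lipnorm g" using g(3) L0[of k] by (simp add: divide_le_eq)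
    then show "z \<le> 1" using g(2) by linarith
  qed
  obtain r \<psi> where r: "strict_mono r" "\<psi> \<in> FreeR"
    and lim: "(\<lambda>n. dnorm (\<lambda>g. T (\<phi> (r n)) g - \<psi> g)) \<longlonglongrightarrow> 0"
    using assms(6) phiF phiN unfolding compact_on_FreeR_def by blast
  have "\<forall>\<^sub>F n in sequentially. dnorm (\<lambda>g. T (\<phi> (r n)) g - \<psi> g) < c / 4"
  proof -
    have "c / 4 > 0" using c0 by simp
    from order_tendstoD(2)[OF lim this] show ?thesis .
  qed
  then obtain N where N: "\<And>n. n \<ge> N \<Longrightarrow> dnorm (\<lambda>g. T (\<phi> (r n)) g - \<psi> g) < c / 4"
    unfolding eventually_sequentially by blast
  have bnd: "\<bar>T (\<phi> (r n)) g - \<psi> g\<bar> < c / 4" if "n \<ge> N" "g \<in> Lip0" "lipnorm g \<le> 1" for n g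
  proof -
    obtain B1 where B1: "\<forall>h. h \<in> Lip0 \<and> lipnorm h \<le> 1 \<longrightarrow> \<bar>T (\<phi> (r n)) h\<bar> \<le> B1"
      using FreeR_bdd TF phiF by blast
    obtain B2 where B2: "\<forall>h. h \<in> Lip0 \<and> lipnorm h \<le> 1 \<longrightarrow> \<bar>\<psi> h\<bar> \<le> B2"
      using FreeR_bdd r(2) by blast
    have "\<exists>B. \<forall>h. h \<in> Lip0 \<and> lipnorm h \<le> 1 \<longrightarrow> \<bar>(\<lambda>g. T (\<phi> (r n)) g - \<psi> g) h\<bar> \<le> B"
    proof (intro exI[of _ "B1 + B2"] allI impI)
      fix h assume "h \<in> Lip0 \<and> lipnorm h \<le> 1"
      then show "\<bar>(\<lambda>g. T (\<phi> (r n)) g - \<psi> g) h\<bar> \<le> B1 + B2" using B1 B2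
        by (smt (verit, best))
    qed
    from dnorm_upper[OF this that(2,3)] N[OF that(1)] show ?thesis by simp
  qed
  define k where "k = r N"
  define l where "l = r (Suc N)"
  have kl: "k < l" using r(1) by (simp add: k_def l_def strict_mono_def)
  have "(2::real) ^ Suc k \<le> 2 ^ l" using kl by (intro power_increasing) auto
  then have "(b - a) * (2 * 2 ^ k) \<le> (b - a) * 2 ^ l" using ab
    by (intro mult_left_mono) auto
  then have Lkl: "2 * L l \<le> L k" using ab
    by (simp add: L_def XY(2) field_simps)
  define lo where "lo = min (f (X l)) (f (Y l))"
  define hi where "hi = max (f (X l)) (f (Y l))"
  have lohi: "lo \<le> hi" by (simp add: lo_def hi_def)
  define g where "g t = max lo (min hi t) - max lo (min hi 0)" for t
  have gl: "1-lipschitz_on UNIV g"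
    unfolding lipschitz_on_def g_def dist_real_def using lohi
    by (auto simp: max_def min_def abs_if)
  have gL: "g \<in> Lip0" using gl by (auto simp: Lip0_def g_def)
  have gN: "lipnorm g \<le> 1" by (rule lipnorm_le[OF gl])
  have gvar: "\<bar>g u - g v\<bar> \<le> hi - lo" for u v
    unfolding g_def using lohi by (auto simp: max_def min_def abs_if)
  have gJ: "\<bar>g (f (Y l)) - g (f (X l))\<bar> = \<bar>f (Y l) - f (X l)\<bar>"
    unfolding g_def lo_def hi_def by (auto simp: max_def min_def abs_if)
  have hl: "hi - lo = \<bar>f (Y l) - f (X l)\<bar>" by (auto simp: lo_def hi_def)
  have TA: "T (\<phi> m) g = (g (f (Y m)) - g (f (X m))) / L m" for m
    using gL by (simp add: Tphi delta_def diff_divide_distrib)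
  define J where "J = \<bar>f (Y l) - f (X l)\<bar>"
  have J: "c * L l \<le> J" using XY(3)[of l] by (simp add: J_def L_def)
  have A1: "\<bar>T (\<phi> l) g\<bar> = J / L l" using TA[of l] gJ L0[of l] by (simp add: J_def)
  have A2: "\<bar>T (\<phi> k) g\<bar> \<le> J / L k" using TA[of k] gvar hl L0[of k]
    by (simp add: J_def divide_right_mono)
  have "J / L k \<le> J / (2 * L l)" using Lkl L0[of l] J c0
    by (intro divide_left_mono) (auto simp: J_def intro: mult_pos_pos)
  then have "\<bar>T (\<phi> l) g - T (\<phi> k) g\<bar> \<ge> J / L l - J / (2 * L l)" using A1 A2 by linarith
  moreover have "J / L l - J / (2 * L l) = J / (2 * L l)" using L0[of l] by (simp add: field_simps)
  moreover have "c / 2 \<le> J / (2 * L l)" using J L0[of l] by (simp add: field_simps)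
  ultimately have big: "c / 2 \<le> \<bar>T (\<phi> l) g - T (\<phi> k) g\<bar>" by linarith
  have "\<bar>T (\<phi> l) g - \<psi> g\<bar> < c / 4" using bnd[of "Suc N" g] gL gN by (simp add: l_def)
  moreover have "\<bar>T (\<phi> k) g - \<psi> g\<bar> < c / 4" using bnd[of N g] gL gN by (simp add: k_def)
  ultimately show False using big by linarith
qed

end
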